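(* Let $(M,d)$ be a compact metric space, $\mu$ a probability measure on $M$, $k:M\times M\to[0,1]$ a measurable kernel, $M^s\subseteq M$ a measurable set, and $\rho>0$. Then there exists a unique measurable map $v^*:M\to[0,1]$ such that $v^*(x)=1$ for all $x\in M^s$ and, for all $x\in M\setminus M^s$, $$v^*(x)=\frac{\int_{M^s}k(x,y)\,d\mu(y)+\int_{M\setminus M^s}v^*(y)k(x,y)\,d\mu(y)}{\rho+\int_M k(x,y)\,d\mu(y)}.$$ *)

theory Defs
  imports "HOL-Probability.Probability"
begin

end

theory Submission
  imports Defs
begin

theorem theorem1:
  fixes \<mu> :: "'a::metric_space measure"
    and k :: "'a \<Rightarrow> 'a \<Rightarrow> real"
    and Ms :: "'a set"
    and \<rho> :: real
  assumes "compact (UNIV :: 'a set)"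
    and "sets \<mu> = sets borel"
    and "prob_space \<mu>"
    and "(\<lambda>(x, y). k x y) \<in> borel_measurable (\<mu> \<Otimes>\<^sub>M \<mu>)"
    and "\<And>x y. 0 \<le> k x y \<and> k x y \<le> 1"
    and "Ms \<in> sets borel"
    and "\<rho> > 0"
  shows "\<exists>!v :: 'a \<Rightarrow> real.
           v \<in> borel_measurable \<mu> \<and>
           (\<forall>x. 0 \<le> v x \<and> v x \<le> 1) \<and>
           (\<forall>x\<in>Ms. v x = 1) \<and>
           (\<forall>x\<in>UNIV - Ms. v x =
              ((LINT y:Ms|\<mu>. k x y) + (LINT y:(UNIV - Ms)|\<mu>. v y * k x y))
              / (\<rho> + (LINT y|\<mu>. k x y)))"
proof -
  interpret prob_space \<mu> by fact
  have sp: "space \<mu> = UNIV" using assms(2) sets_eq_imp_space_eq by fastforce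
  have Ms[measurable]: "Ms \<in> sets \<mu>" using assms(2,6) by simp
  have U[measurable]: "UNIV - Ms \<in> sets \<mu>" using Ms sp by (metis sets.compl_sets)
  have kk[measurable]: "(\<lambda>p. k (fst p) (snd p)) \<in> borel_measurable (\<mu> \<Otimes>\<^sub>M \<mu>)"
    using assms(4) by (simp add: case_prod_beta')
  have kx[measurable]: "k x \<in> borel_measurable \<mu>" for x
    using measurable_Pair2[OF assms(4), of x] sp by simp
  have k0: "0 \<le> k x y" and k1: "k x y \<le> 1" for x y using assms(5) by auto
  define U where "U = UNIV - Ms"
  define a where "a x = (LINT y:Ms|\<mu>. k x y)" for x
  define K where "K x = (LINT y|\<mu>. k x y)" for x
  define I where "I v x = (LINT y:U|\<mu>. v y * k x y)" for v :: "'a \<Rightarrow> real" and x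
  define T where "T v x = (if x \<in> Ms then 1 else (a x + I v x) / (\<rho> + K x))" for v x
  define good where "good v \<longleftrightarrow> v \<in> borel_measurable \<mu> \<and> (\<forall>x. 0 \<le> v x \<and> v x \<le> 1)" for v :: "'a \<Rightarrow> real"
  have intb: "integrable \<mu> g" if "g \<in> borel_measurable \<mu>" "\<And>y. \<bar>g y\<bar> \<le> 1" for g :: "'a \<Rightarrow> real"
    using that by (intro integrable_const_bound[where B=1]) auto
  have K01: "0 \<le> K x \<and> K x \<le> 1" for x
  proof -
    have "K x \<le> (LINT y|\<mu>. 1)" unfolding K_def
      by (intro integral_mono intb) (auto simp: k0 k1 abs_le_iff)
    moreover have "0 \<le> K x" unfolding K_def using k0 by (intro Bochner_Integration.integral_nonneg) auto
    ultimately show ?thesis by (simp add: prob_space)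
  qed
  have aI: "a x + I v x = (LINT y|\<mu>. (indicator Ms y + indicator U y * v y) * k x y)"
    and aIK: "0 \<le> a x + I v x \<and> a x + I v x \<le> K x"
    if "good v" for v x
  proof -
    have vm[measurable]: "v \<in> borel_measurable \<mu>" and v01: "\<And>y. 0 \<le> v y \<and> v y \<le> 1"
      using that by (auto simp: good_def)
    have bd: "\<bar>indicator A y * g y\<bar> \<le> 1" if "\<And>y. 0 \<le> g y \<and> g y \<le> 1" for A and g :: "'a \<Rightarrow> real" and y
      using that[of y] by (auto simp: indicator_def)
    have i1: "integrable \<mu> (\<lambda>y. indicator Ms y * k x y)"
      by (rule intb) (auto simp: k0 k1 indicator_def abs_le_iff)
    have i2: "integrable \<mu> (\<lambda>y. indicator U y * (v y * k x y))"
      apply (rule intb) apply measurable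
      using v01 k0 k1 by (auto simp: U_def indicator_def abs_le_iff intro!: mult_le_one)
    show eq: "a x + I v x = (LINT y|\<mu>. (indicator Ms y + indicator U y * v y) * k x y)"
      unfolding a_def I_def set_lebesgue_integral_def real_scaleR_def
      by (subst Bochner_Integration.integral_add[OF i1 i2, symmetric]) (auto simp: algebra_simps intro!: Bochner_Integration.integral_cong)
    have "(LINT y|\<mu>. (indicator Ms y + indicator U y * v y) * k x y) \<le> K x"
      unfolding K_def
      apply (intro integral_mono)
        apply (rule intb) apply measurable
      using v01 k0 k1 by (auto simp: U_def indicator_def intro!: intb mult_le_one mult_left_le_one_le)
    moreover have "0 \<le> (LINT y|\<mu>. (indicator Ms y + indicator U y * v y) * k x y)"
      using v01 k0 by (intro Bochner_Integration.integral_nonneg) auto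
    ultimately show "0 \<le> a x + I v x \<and> a x + I v x \<le> K x" using eq by simp
  qed
  have Tgood: "good (T v)" if "good v" for v
  proof -
    have vm[measurable]: "v \<in> borel_measurable \<mu>" using that by (auto simp: good_def)
    have "T v \<in> borel_measurable \<mu>"
      unfolding T_def a_def I_def K_def set_lebesgue_integral_def U_def
      by measurable
    moreover have "0 \<le> T v x \<and> T v x \<le> 1" for x
      using aIK[OF that, of x] K01[of x] assms(7)
      by (auto simp: T_def divide_le_eq)
    ultimately show ?thesis by (simp add: good_def)
  qed

  have Iint: "integrable \<mu> (\<lambda>y. indicator U y * (v y * k x y))" if "good v" for v x
  proof -
    have vm[measurable]: "v \<in> borel_measurable \<mu>" and v01: "\<And>y. 0 \<le> v y \<and> v y \<le> 1"
      using that by (auto simp: good_def)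
    show ?thesis
      apply (rule intb) apply (unfold U_def) apply measurable
      using v01 k0 k1 by (auto simp: indicator_def abs_le_iff intro!: mult_le_one)
  qed
  have Tmono: "T v x \<le> T w x" if "good v" "good w" "\<forall>y. v y \<le> w y" for v w x
  proof -
    have "I v x \<le> I w x" unfolding I_def set_lebesgue_integral_def real_scaleR_def
      using that(3) k0 by (intro integral_mono Iint that) (auto simp: indicator_def mult_right_mono)
    then show ?thesis using K01[of x] assms(7) by (auto simp: T_def divide_right_mono)
  qed
  have Idiff: "I v x - I w x \<le> S * K x" if "good v" "good w" "\<forall>y. v y - w y \<le> S" "0 \<le> S" for v w x S
  proof -
    have "I v x - I w x = (LINT y|\<mu>. indicator U y * (v y * k x y) - indicator U y * (w y * k x y))"
      unfolding I_def set_lebesgue_integral_def real_scaleR_def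
      by (rule Bochner_Integration.integral_diff[symmetric]) (intro Iint that)+
    also have "\<dots> \<le> (LINT y|\<mu>. S * k x y)"
    proof (rule integral_mono)
      show "integrable \<mu> (\<lambda>y. indicator U y * (v y * k x y) - indicator U y * (w y * k x y))"
        by (intro Bochner_Integration.integrable_diff Iint that)
      show "integrable \<mu> (\<lambda>y. S * k x y)"
        by (intro Bochner_Integration.integrable_mult_right intb) (auto simp: k0 k1 abs_le_iff)
      fix y
      have "indicator U y * (v y - w y) \<le> S" using that(3,4) by (auto simp: indicator_def)
      then have "indicator U y * (v y - w y) * k x y \<le> S * k x y" using k0 by (rule mult_right_mono)
      then show "indicator U y * (v y * k x y) - indicator U y * (w y * k x y) \<le> S * k x y"
        by (simp add: algebra_simps)
    qed
    also have "\<dots> = S * K x" unfolding K_def by simp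
    finally show ?thesis .
  qed
  define f where "f n = (T ^^ n) (indicator Ms)" for n
  have fgood: "good (f n)" for n
  proof (induction n)
    case 0
    then show ?case by (auto simp: f_def good_def indicator_def)
  next
    case (Suc n)
    then show ?case using Tgood by (simp add: f_def)
  qed
  have fSuc: "f (Suc n) = T (f n)" for n by (simp add: f_def)
  have finc: "f n y \<le> f (Suc n) y" for n y
  proof (induction n arbitrary: y)
    case 0
    have "good (f 1)" by (rule fgood)
    then have "0 \<le> f 1 y" by (simp add: good_def)
    then show ?case by (auto simp: f_def T_def indicator_def)
  next
    case (Suc n)
    then show ?case unfolding fSuc[of "Suc n"] fSuc[of n] using fgood Tgood by (intro Tmono) auto
  qed
  define v where "v x = (SUP n. f n x)" for x
  have lim: "(\<lambda>n. f n x) \<longlonglongrightarrow> v x" for x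
    unfolding v_def
  proof (rule LIMSEQ_incseq_SUP)
    show "bdd_above (range (\<lambda>n. f n x))" using fgood by (auto simp: good_def bdd_above_def)
    show "incseq (\<lambda>n. f n x)" using finc by (intro incseq_SucI) auto
  qed
  have vgood: "good v"
  proof -
    have "v \<in> borel_measurable \<mu>"
      by (rule borel_measurable_LIMSEQ_real[OF lim]) (use fgood in \<open>auto simp: good_def\<close>)
    moreover have "0 \<le> v x \<and> v x \<le> 1" for x
    proof
      show "0 \<le> v x" using lim[of x] fgood by (intro LIMSEQ_le_const[OF lim[of x]]) (auto simp: good_def)
      show "v x \<le> 1" using lim[of x] fgood by (intro LIMSEQ_le_const2[OF lim[of x]]) (auto simp: good_def)
    qed
    ultimately show ?thesis by (simp add: good_def)
  qed
  have vfix: "T v x = v x" for x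
  proof -
    have "(\<lambda>n. T (f n) x) \<longlonglongrightarrow> T v x"
    proof (cases "x \<in> Ms")
      case True then show ?thesis by (simp add: T_def)
    next
      case False
      have "(\<lambda>n. I (f n) x) \<longlonglongrightarrow> I v x"
        unfolding I_def set_lebesgue_integral_def real_scaleR_def
      proof (rule integral_dominated_convergence[where w="\<lambda>_. 1"])
        show "(\<lambda>y. indicator U y * (v y * k x y)) \<in> borel_measurable \<mu>"
          using Iint[OF vgood] by auto
        show "(\<lambda>y. indicator U y * (f n y * k x y)) \<in> borel_measurable \<mu>" for n
          using Iint[OF fgood] by auto
        show "integrable \<mu> (\<lambda>_. 1::real)" by simp
        show "AE y in \<mu>. (\<lambda>n. indicator U y * (f n y * k x y)) \<longlonglongrightarrow> indicator U y * (v y * k x y)"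
          by (intro always_eventually allI tendsto_intros lim)
        show "AE y in \<mu>. norm (indicator U y * (f n y * k x y)) \<le> 1" for n
          using fgood[of n] k0 k1 by (auto simp: good_def indicator_def abs_le_iff intro!: mult_le_one)
      qed
      then show ?thesis using False K01[of x] assms(7) by (auto simp: T_def intro!: tendsto_intros)
    qed
    moreover have "(\<lambda>n. T (f n) x) \<longlonglongrightarrow> v x"
      using LIMSEQ_Suc[OF lim[of x]] by (simp add: fSuc)
    ultimately show ?thesis by (rule LIMSEQ_unique)
  qed
  have uniq: "w = v" if "good w" "\<And>x. T w x = w x" for w
  proof -
    define S where "S = (SUP x. \<bar>w x - v x\<bar>)"
    have bdd: "bdd_above (range (\<lambda>x. \<bar>w x - v x\<bar>))"
    proof (rule bdd_aboveI[where M=1])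
      fix z assume "z \<in> range (\<lambda>x. \<bar>w x - v x\<bar>)"
      then obtain x where z: "z = \<bar>w x - v x\<bar>" by auto
      have "0 \<le> w x" "w x \<le> 1" "0 \<le> v x" "v x \<le> 1" using that(1) vgood by (auto simp: good_def)
      then show "z \<le> 1" unfolding z by linarith
    qed
    have Sup: "\<bar>w x - v x\<bar> \<le> S" for x unfolding S_def using bdd by (intro cSUP_upper) auto
    have S0: "0 \<le> S" using Sup[of undefined] by linarith
    have pt: "\<bar>w x - v x\<bar> \<le> S / (1 + \<rho>)" for x
    proof (cases "x \<in> Ms")
      case True then show ?thesis using that(2)[of x] vfix[of x] S0 assms(7) by (simp add: T_def)
    next
      case False
      have d1: "I w x - I v x \<le> S * K x" using Sup S0 by (intro Idiff that(1) vgood) (auto simp: abs_le_iff)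
      have d2: "I v x - I w x \<le> S * K x" using Sup S0 by (intro Idiff that(1) vgood) (auto simp: abs_le_iff)
      have pos: "0 < \<rho> + K x" using K01[of x] assms(7) by linarith
      have "w x - v x = (I w x - I v x) / (\<rho> + K x)"
        using that(2)[of x] vfix[of x] False pos by (auto simp: T_def field_simps)
      then have "\<bar>w x - v x\<bar> \<le> S * K x / (\<rho> + K x)"
        using d1 d2 pos by (simp add: abs_le_iff divide_right_mono flip: minus_divide_left)
      also have "\<dots> \<le> S / (1 + \<rho>)"
      proof -
        have "S * K x * \<rho> \<le> S * \<rho>" using K01[of x] S0 assms(7)
          by (simp add: mult_left_le_one_le mult_right_le_one_le mult_left_mono mult_right_mono)
        then have "S * K x * (1 + \<rho>) \<le> S * (\<rho> + K x)" by (simp add: algebra_simps)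
        then show ?thesis using pos assms(7) by (simp add: divide_simps)
      qed
      finally show ?thesis .
    qed
    have "S \<le> S / (1 + \<rho>)" unfolding S_def by (rule cSUP_least) (use pt S_def in auto)
    then have "S * (1 + \<rho>) \<le> S" using assms(7) by (simp add: divide_simps)
    then have "S \<le> 0" using assms(7) S0 by (simp add: algebra_simps mult_le_0_iff)
    then show ?thesis using Sup S0 by (intro ext) (smt (verit) Sup)
  qed
  have Ueq: "UNIV - Ms = U" by (simp add: U_def)
  have char: "(\<forall>x\<in>Ms. w x = 1) \<and> (\<forall>x\<in>UNIV - Ms. w x =
              ((LINT y:Ms|\<mu>. k x y) + (LINT y:(UNIV - Ms)|\<mu>. w y * k x y))
              / (\<rho> + (LINT y|\<mu>. k x y))) \<longleftrightarrow> (\<forall>x. T w x = w x)" for w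
    unfolding T_def a_def I_def K_def U_def by auto
  show ?thesis
  proof (rule ex1I[where a=v])
    show "v \<in> borel_measurable \<mu> \<and>
           (\<forall>x. 0 \<le> v x \<and> v x \<le> 1) \<and>
           (\<forall>x\<in>Ms. v x = 1) \<and>
           (\<forall>x\<in>UNIV - Ms. v x =
              ((LINT y:Ms|\<mu>. k x y) + (LINT y:(UNIV - Ms)|\<mu>. v y * k x y))
              / (\<rho> + (LINT y|\<mu>. k x y)))"
      using vgood vfix char[of v] by (simp add: good_def)
  next
    fix w assume "w \<in> borel_measurable \<mu> \<and>
           (\<forall>x. 0 \<le> w x \<and> w x \<le> 1) \<and>
           (\<forall>x\<in>Ms. w x = 1) \<and>
           (\<forall>x\<in>UNIV - Ms. w x =
              ((LINT y:Ms|\<mu>. k x y) + (LINT y:(UNIV - Ms)|\<mu>. w y * k x y))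
              / (\<rho> + (LINT y|\<mu>. k x y)))"
    then show "w = v" using char[of w] by (intro uniq) (auto simp: good_def)
  qed
qed

end
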